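(* For all integers $m,k\ge 0$, $$\int_0^{\pi/2} x^{2m}\frac{\sin(2kx)}{\sin(x)}\,dx=2(2m)!\sum_{j=0}^m\frac{(-1)^j\,\overline{O}_k^{(2j+1)}}{(2m-2j)!}\left(\frac{\pi}{2}\right)^{2m-2j}.$$
   Context: For integers $k\ge 0$ and $r\ge1$, the alternating odd harmonic number is $\overline{O}_k^{(r)}=\sum_{i=1}^k\frac{(-1)^{i-1}}{(2i-1)^r}$ (empty sum $=0$). *)

theory Defs
  imports "HOL-Analysis.Analysis"
begin

definition alt_odd_harmonic :: "nat \<Rightarrow> nat \<Rightarrow> real" where
  "alt_odd_harmonic k r = (\<Sum>i=1..k. (-1) ^ (i - 1) / (2 * real i - 1) ^ r)"

end

theory Submission
  imports Defs
begin

fun PP :: "real \<Rightarrow> nat \<Rightarrow> real \<Rightarrow> real" and QQ :: "real \<Rightarrow> nat \<Rightarrow> real \<Rightarrow> real" where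
  "PP a 0 x = sin (a*x) / a"
| "PP a (Suc n) x = x ^ Suc n * sin (a*x) / a - (real (Suc n) / a) * QQ a n x"
| "QQ a 0 x = - cos (a*x) / a"
| "QQ a (Suc n) x = (real (Suc n) / a) * PP a n x - x ^ Suc n * cos (a*x) / a"

lemma pow_pred_aux: "0 < n \<Longrightarrow> (x::real) * x ^ (n - Suc 0) = x ^ n"
  by (cases n) auto

lemma PQ_deriv:
  assumes "a \<noteq> 0"
  shows "(PP a n has_real_derivative x ^ n * cos (a*x)) (at x) \<and>
         (QQ a n has_real_derivative x ^ n * sin (a*x)) (at x)"
proof (induction n)
  case 0
  have 1: "(PP a 0 has_real_derivative x ^ 0 * cos (a*x)) (at x)"
    unfolding PP.simps[abs_def] using assms
    by (auto intro!: derivative_eq_intros)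
  have 2: "(QQ a 0 has_real_derivative x ^ 0 * sin (a*x)) (at x)"
    unfolding QQ.simps[abs_def] using assms
    by (auto intro!: derivative_eq_intros)
  show ?case using 1 2 by blast
next
  case (Suc n)
  have ih1: "(PP a n has_real_derivative x ^ n * cos (a*x)) (at x)"
   and ih2: "(QQ a n has_real_derivative x ^ n * sin (a*x)) (at x)" using Suc.IH by auto
  have h1: "((\<lambda>x. x ^ Suc n * sin (a*x) / a) has_real_derivative
      (real (Suc n) * x ^ n * sin (a*x) / a + x ^ Suc n * cos (a*x))) (at x)"
    using assms by (auto intro!: derivative_eq_intros simp: field_simps pow_pred_aux)
  have h2: "((\<lambda>x. x ^ Suc n * cos (a*x) / a) has_real_derivative
      (real (Suc n) * x ^ n * cos (a*x) / a - x ^ Suc n * sin (a*x))) (at x)"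
    using assms by (auto intro!: derivative_eq_intros simp: field_simps pow_pred_aux)
  have 1: "(PP a (Suc n) has_real_derivative x ^ Suc n * cos (a*x)) (at x)"
  proof -
    have "((\<lambda>x. x ^ Suc n * sin (a*x) / a - (real (Suc n) / a) * QQ a n x) has_real_derivative
      (real (Suc n) * x ^ n * sin (a*x) / a + x ^ Suc n * cos (a*x)) - (real (Suc n) / a) * (x ^ n * sin (a*x))) (at x)"
      by (intro DERIV_diff h1 DERIV_cmult ih2)
    then show ?thesis by (simp add: PP.simps(2)[abs_def] field_simps del: PP.simps)
  qed
  have 2: "(QQ a (Suc n) has_real_derivative x ^ Suc n * sin (a*x)) (at x)"
  proof -
    have "((\<lambda>x. (real (Suc n) / a) * PP a n x - x ^ Suc n * cos (a*x) / a) has_real_derivative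
      (real (Suc n) / a) * (x ^ n * cos (a*x)) - (real (Suc n) * x ^ n * cos (a*x) / a - x ^ Suc n * sin (a*x))) (at x)"
      by (intro DERIV_diff h2 DERIV_cmult ih1)
    then show ?thesis by (simp add: QQ.simps(2)[abs_def] field_simps del: QQ.simps)
  qed
  show ?case using 1 2 by blast
qed

lemma PP_zero: "PP a (2*m) 0 = 0"
  by (induction m) (auto simp: numeral_2_eq_2)

lemma PP_val:
  assumes a: "a \<noteq> 0" and c: "cos (a*h) = 0" and sn: "sin (a*h) = s"
  shows "PP a (2*m) h = (\<Sum>j=0..m. (-1)^j * s / a^(2*j+1) * (fact (2*m) / fact (2*m-2*j)) * h^(2*m-2*j))"
proof (induction m)
  case 0
  then show ?case using sn by simp
next
  case (Suc m)
  have e: "2 * Suc m = Suc (Suc (2*m))" by simp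
  have "PP a (2 * Suc m) h = h^(2*m+2) * s / a - (2*m+2)*(2*m+1)/a^2 * PP a (2*m) h"
    unfolding e using a c sn by (simp add: field_simps power2_eq_square)
  also have "\<dots> = h^(2*m+2) * s / a - (2*m+2)*(2*m+1)/a^2 *
     (\<Sum>j=0..m. (-1)^j * s / a^(2*j+1) * (fact (2*m) / fact (2*m-2*j)) * h^(2*m-2*j))"
    using Suc.IH by simp
  also have "\<dots> = h^(2*m+2) * s / a + (\<Sum>j=0..m. (-1)^(Suc j) * s / a^(2*(Suc j)+1) * (fact (2*Suc m) / fact (2*Suc m-2*Suc j)) * h^(2*Suc m-2*Suc j))"
  proof -
    have "- ((2*m+2)*(2*m+1)/a^2 *
     (\<Sum>j=0..m. (-1)^j * s / a^(2*j+1) * (fact (2*m) / fact (2*m-2*j)) * h^(2*m-2*j)))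
      = (\<Sum>j=0..m. (-1)^(Suc j) * s / a^(2*(Suc j)+1) * (fact (2*Suc m) / fact (2*Suc m-2*Suc j)) * h^(2*Suc m-2*Suc j))"
      unfolding sum_distrib_left sum_negf[symmetric]
    proof (rule sum.cong[OF refl])
      fix j assume "j \<in> {0..m}"
      have f: "fact (2 * Suc m) = ((2*m+2)*(2*m+1)) * (fact (2*m) :: real)"
        unfolding e by (simp add: algebra_simps)
      have g: "2*Suc m - 2*Suc j = 2*m - 2*j" by simp
      show "- ((2*m+2)*(2*m+1)/a^2 * ((-1)^j * s / a^(2*j+1) * (fact (2*m) / fact (2*m-2*j)) * h^(2*m-2*j)))
        = (-1)^(Suc j) * s / a^(2*(Suc j)+1) * (fact (2*Suc m) / fact (2*Suc m-2*Suc j)) * h^(2*Suc m-2*Suc j)"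
        unfolding f g using a by (simp add: field_simps power2_eq_square)
    qed
    then show ?thesis by linarith
  qed
  also have "\<dots> = (\<Sum>j=0..Suc m. (-1)^j * s / a^(2*j+1) * (fact (2*Suc m) / fact (2*Suc m-2*j)) * h^(2*Suc m-2*j))"
    by (subst sum.atLeast0_atMost_Suc_shift) (simp add: e)
  finally show ?case .
qed

lemma trig_half:
  assumes "i \<ge> 1"
  shows "cos ((2*real i - 1) * (pi/2)) = 0 \<and> sin ((2*real i - 1) * (pi/2)) = (-1)^(i-1)"
proof -
  have "(2*real i - 1) * (pi/2) = real (i-1) * pi + pi/2"
    using assms by (simp add: of_nat_diff field_simps)
  then show ?thesis by (simp only: cos_add sin_add cos_pi_half sin_pi_half cos_npi sin_npi) simp
qed

lemma sin_step: "sin (A + 2*x) = (sin A + 2 * sin x * cos (A + x) :: real)"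
proof -
  have a: "sin (2 * x) = 2 * sin x * cos x" by (rule sin_double)
  have b: "cos (2 * x) = 1 - 2 * (sin x)^2" by (rule cos_double_sin)
  show ?thesis by (simp only: sin_add cos_add a b) (simp add: algebra_simps power2_eq_square)
qed

lemma sin_sum: "sin (2 * real k * x) = 2 * sin x * (\<Sum>i=1..k. cos ((2*real i - 1) * x))"
proof (induction k)
  case 0
  then show ?case by simp
next
  case (Suc k)
  have "sin (2 * real (Suc k) * x) = sin (2 * real k * x + 2*x)" by (simp add: field_simps)
  also have "\<dots> = sin (2 * real k * x) + 2 * sin x * cos (2 * real k * x + x)"
    by (rule sin_step)
  also have "2 * real k * x + x = (2*real (Suc k) - 1) * x" by (simp add: field_simps)
  finally show ?case using Suc.IH by (simp add: field_simps)
qed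

theorem lemma1:
  fixes m k :: nat
  shows "((\<lambda>x. x ^ (2*m) * (sin (2 * real k * x) / sin x)) has_integral
           2 * fact (2*m) * (\<Sum>j=0..m. (-1) ^ j * alt_odd_harmonic k (2*j+1) / fact (2*m - 2*j)
                              * (pi / 2) ^ (2*m - 2*j))) {0..pi/2}"
proof -
  define A where "A i = 2 * real i - 1" for i :: nat
  have Apos: "A i \<noteq> 0" if "i \<ge> 1" for i using that by (simp add: A_def)
  define F where "F x = 2 * (\<Sum>i=1..k. PP (A i) (2*m) x)" for x
  define g where "g x = 2 * (\<Sum>i=1..k. x ^ (2*m) * cos (A i * x))" for x
  have deriv: "(F has_real_derivative g x) (at x)" for x
    unfolding F_def[abs_def] g_def
    by (intro DERIV_cmult DERIV_sum) (use PQ_deriv Apos in auto)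
  have int1: "(g has_integral F (pi/2) - F 0) {0..pi/2}"
    by (rule fundamental_theorem_of_calculus)
       (auto intro: has_field_derivative_at_within simp: has_real_derivative_iff_has_vector_derivative[symmetric] deriv)
  have F0: "F 0 = 0" unfolding F_def by (simp add: PP_zero)
  have Fh: "F (pi/2) = 2 * (\<Sum>i=1..k. (\<Sum>j=0..m. (-1)^j * (-1)^(i-1) / A i^(2*j+1) * (fact (2*m) / fact (2*m-2*j)) * (pi/2)^(2*m-2*j)))"
    unfolding F_def
    by (intro arg_cong[where f="\<lambda>t. 2 * t"] sum.cong refl PP_val)
       (use Apos trig_half in \<open>auto simp: A_def\<close>)
  have val: "F (pi/2) - F 0 = 2 * fact (2*m) * (\<Sum>j=0..m. (-1) ^ j * alt_odd_harmonic k (2*j+1) / fact (2*m - 2*j)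
                              * (pi / 2) ^ (2*m - 2*j))"
    unfolding F0 Fh alt_odd_harmonic_def A_def
    apply (subst sum.swap)
    apply (simp add: sum_distrib_left sum_distrib_right sum_divide_distrib)
    apply (intro sum.cong refl)
    apply (simp add: field_simps)
    done
  show ?thesis
    unfolding val[symmetric]
  proof (rule has_integral_spike_finite[OF _ _ int1])
    show "finite {0::real}" by simp
    fix x assume x: "x \<in> {0..pi/2} - {0}"
    show "x ^ (2*m) * (sin (2 * real k * x) / sin x) = g x"
    proof -
      have "0 < x" "x < pi" using x pi_gt_zero by auto
      then have "sin x \<noteq> 0" using sin_gt_zero by fastforce
      then show "x ^ (2*m) * (sin (2 * real k * x) / sin x) = g x"
        unfolding g_def sin_sum A_def by (simp add: sum_distrib_left field_simps)
    qed
  qed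
qed

end
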